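(* Under the standing assumptions, let $u\in X\setminus\{0\}$ and $\zeta\in X^*\setminus\{0\}$ with $\zeta\in\partial J(u)$. Then $g(u,\zeta)=0$ if and only if $u$ is a $p$-eigenvector of $J$ with subgradient $\zeta$ (and eigenvalue $\lambda=R(u)$).
   Context: Standing assumptions: $X$ is a real reflexive Banach space with dual $X^*$ and duality pairing $\langle\cdot,\cdot\rangle$; $\Gamma_0(X)$ is the class of proper, lower semi-continuous, convex functionals $X\to\mathbb{R}\cup\{+\infty\}$. Fix $1<p<\infty$ and $q=\frac{p}{p-1}$. Let $J\in\Gamma_0(X)$, and let $H\in\Gamma_0(X)$ be absolutely $p$-homogeneous ($H(tu)=|t|^pH(u)$) such that $|u|_H:=(pH(u))^{1/p}$ is a norm on $X$, so $H(u)=\frac1p|u|_H^p$. The dual norm is $|\zeta|_{H^*}=\sup_{u\ne0}\langle\zeta,u\rangle/|u|_H$, and $H^*(\zeta)=\frac1q|\zeta|_{H^*}^q$. The Fenchel conjugate is $J^*(\zeta)=\sup_{u\in X}\langle\zeta,u\rangle-J(u)$ and the subdifferential is $\partial J(u)=\{\zeta\in X^*:\ J(u)+\langle\zeta,v-u\rangle\le J(v)\ \forall v\in X\}$. Growth assumption: there is $c>0$ with $H(u)\le cJ(u)$ for all $u\in X$. The Rayleigh quotient is $R(u)=J(u)/H(u)$ for $u\ne0$ and the dual Rayleigh quotient is $R_*(\zeta)=J^*(\zeta)/H^*(\zeta)$ for $\zeta\ne0$. The duality gap is $g(u,\zeta)=R(u)^{-1/p}-\operatorname{sign}(J^*(\zeta))\,|R_*(\zeta)|^{1/q}$.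 A $p$-eigenvector of $J$: $u\in X\setminus\{0\}$ with subgradient $\zeta\in\partial J(u)$ and eigenvalue $\lambda=R(u)\in\mathbb{R}$ such that $\zeta\in\lambda\,\partial H(u)$. *)

theory Defs
  imports "HOL-Analysis.Analysis"
begin

definition reflexive_space :: "'a::banach itself \<Rightarrow> bool" where
  "reflexive_space T \<longleftrightarrow>
     (\<forall>\<phi> :: ('a \<Rightarrow>\<^sub>L real) \<Rightarrow>\<^sub>L real. \<exists>x::'a. \<forall>\<zeta>. blinfun_apply \<phi> \<zeta> = blinfun_apply \<zeta> x)"

text \<open>Functionals with values in R union {+infinity} are modelled as ereal-valued
  functions that never take the value -infinity.\<close>
definition proper_fun :: "('a \<Rightarrow> ereal) \<Rightarrow> bool" where
  "proper_fun f \<longleftrightarrow> (\<forall>x. f x \<noteq> -\<infinity>) \<and> (\<exists>x. f x \<noteq> \<infinity>)"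

definition lsc_fun :: "('a::topological_space \<Rightarrow> ereal) \<Rightarrow> bool" where
  "lsc_fun f \<longleftrightarrow> (\<forall>t. closed {x. f x \<le> t})"

definition convex_fun :: "('a::real_vector \<Rightarrow> ereal) \<Rightarrow> bool" where
  "convex_fun f \<longleftrightarrow> (\<forall>x y t. 0 < t \<and> t < 1 \<longrightarrow>
      f (t *\<^sub>R x + (1 - t) *\<^sub>R y) \<le> ereal t * f x + ereal (1 - t) * f y)"

definition Gamma0 :: "('a::real_normed_vector \<Rightarrow> ereal) \<Rightarrow> bool" where
  "Gamma0 f \<longleftrightarrow> proper_fun f \<and> lsc_fun f \<and> convex_fun f"

definition is_norm_fun :: "('a::real_vector \<Rightarrow> real) \<Rightarrow> bool" where
  "is_norm_fun N \<longleftrightarrow> (\<forall>u. 0 \<le> N u) \<and> (\<forall>u. N u = 0 \<longleftrightarrow> u = 0)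
     \<and> (\<forall>t u. N (t *\<^sub>R u) = \<bar>t\<bar> * N u) \<and> (\<forall>u v. N (u + v) \<le> N u + N v)"

definition fconj :: "('a::real_normed_vector \<Rightarrow> ereal) \<Rightarrow> ('a \<Rightarrow>\<^sub>L real) \<Rightarrow> ereal" where
  "fconj f \<zeta> = (SUP u. ereal (blinfun_apply \<zeta> u) - f u)"

definition subdiff :: "('a::real_normed_vector \<Rightarrow> ereal) \<Rightarrow> 'a \<Rightarrow> ('a \<Rightarrow>\<^sub>L real) set" where
  "subdiff f u = {\<zeta>. \<forall>v. f u + ereal (blinfun_apply \<zeta> (v - u)) \<le> f v}"

text \<open>Rayleigh quotient R(u) = J(u)/H(u) (as a real number; it is +infinity only if J(u)
  is, in which case the real value 0 is used, which gives R(u)^(-1/p) = 0 consistently).\<close>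
definition rayleigh :: "('a \<Rightarrow> ereal) \<Rightarrow> ('a \<Rightarrow> real) \<Rightarrow> 'a \<Rightarrow> real" where
  "rayleigh J H u = real_of_ereal (J u / ereal (H u))"

definition dual_rayleigh ::
  "('a::real_normed_vector \<Rightarrow> ereal) \<Rightarrow> ('a \<Rightarrow> real) \<Rightarrow> ('a \<Rightarrow>\<^sub>L real) \<Rightarrow> real" where
  "dual_rayleigh J H \<zeta> = real_of_ereal (fconj J \<zeta> / fconj (\<lambda>u. ereal (H u)) \<zeta>)"

text \<open>Duality gap g(u,zeta), with q = p/(p-1).\<close>
definition duality_gap ::
  "real \<Rightarrow> ('a::real_normed_vector \<Rightarrow> ereal) \<Rightarrow> ('a \<Rightarrow> real) \<Rightarrow> 'a \<Rightarrow> ('a \<Rightarrow>\<^sub>L real) \<Rightarrow> real" where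
  "duality_gap p J H u \<zeta> =
     rayleigh J H u powr (-1 / p)
     - sgn (real_of_ereal (fconj J \<zeta>)) * \<bar>dual_rayleigh J H \<zeta>\<bar> powr (1 / (p / (p - 1)))"

definition p_eigenvector ::
  "('a::real_normed_vector \<Rightarrow> ereal) \<Rightarrow> ('a \<Rightarrow> real) \<Rightarrow> 'a \<Rightarrow> ('a \<Rightarrow>\<^sub>L real) \<Rightarrow> real \<Rightarrow> bool" where
  "p_eigenvector J H u \<zeta> lam \<longleftrightarrow> u \<noteq> 0 \<and> \<zeta> \<in> subdiff J u \<and> lam = rayleigh J H u
     \<and> \<zeta> \<in> (\<lambda>\<eta>. lam *\<^sub>R \<eta>) ` subdiff (\<lambda>v. ereal (H v)) u"

end

theory Submission
  imports Defs
begin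

lemma eta_u:
  fixes H :: "'a::real_normed_vector \<Rightarrow> real" and \<eta> :: "'a \<Rightarrow>\<^sub>L real"
  assumes p: "1 < p"
    and H_hom: "\<forall>t v. H (t *\<^sub>R v) = \<bar>t\<bar> powr p * H v"
    and sub: "\<forall>v. H u + blinfun_apply \<eta> (v - u) \<le> H v"
  shows "blinfun_apply \<eta> u = p * H u"
proof -
  define f where "f t = (t powr p) * H u - H u - (t - 1) * blinfun_apply \<eta> u" for t
  have d: "(f has_real_derivative (p * 1 powr (p - 1) * H u - blinfun_apply \<eta> u)) (at 1)"
    unfolding f_def
    by (auto intro!: derivative_eq_intros has_real_derivative_powr)
  have "\<forall>y. \<bar>1 - y\<bar> < 1/2 \<longrightarrow> f 1 \<le> f y"
  proof (intro allI impI)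
    fix y :: real assume "\<bar>1 - y\<bar> < 1/2"
    moreover have "1 - y \<le> \<bar>1 - y\<bar>" by simp
    ultimately have y: "y > 0" by linarith
    have "H u + blinfun_apply \<eta> (y *\<^sub>R u - u) \<le> H (y *\<^sub>R u)" using sub by blast
    also have "... = y powr p * H u" using H_hom y by simp
    finally have "H u + (y - 1) * blinfun_apply \<eta> u \<le> y powr p * H u"
      by (simp add: blinfun.diff_right blinfun.scaleR_right algebra_simps)
    thus "f 1 \<le> f y" unfolding f_def by simp
  qed
  from DERIV_local_min[OF d _ this] show ?thesis by simp
qed

theorem proposition2p7:
  fixes J :: "'a::banach \<Rightarrow> ereal" and H :: "'a \<Rightarrow> real" and p c :: real
    and u :: 'a and \<zeta> :: "'a \<Rightarrow>\<^sub>L real"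
  assumes refl: "reflexive_space TYPE('a)"
    and p: "1 < p"
    and J: "Gamma0 J"
    and H: "Gamma0 (\<lambda>v. ereal (H v))"
    and H_nonneg: "\<forall>v. 0 \<le> H v"
    and H_hom: "\<forall>t v. H (t *\<^sub>R v) = \<bar>t\<bar> powr p * H v"
    and H_norm: "is_norm_fun (\<lambda>v. (p * H v) powr (1 / p))"
    and growth: "0 < c" "\<forall>v. ereal (H v) \<le> ereal c * J v"
    and u: "u \<noteq> 0" and \<zeta>: "\<zeta> \<noteq> 0" and sub: "\<zeta> \<in> subdiff J u"
  shows "duality_gap p J H u \<zeta> = 0 \<longleftrightarrow> p_eigenvector J H u \<zeta> (rayleigh J H u)"
proof -
  have subJ: "\<And>v. J u + ereal (blinfun_apply \<zeta> (v - u)) \<le> J v"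
    using sub unfolding subdiff_def by blast
  have Hu: "H u > 0"
  proof -
    have "(p * H u) powr (1 / p) \<noteq> 0" using H_norm u unfolding is_norm_fun_def by blast
    hence "H u \<noteq> 0" by auto
    thus ?thesis using H_nonneg[rule_format, of u] by linarith
  qed
  have H0: "H 0 = 0" using H_hom[rule_format, of 0 u] p by simp
  obtain w where w: "J w \<noteq> \<infinity>" "J w \<noteq> -\<infinity>"
    using J unfolding Gamma0_def proper_fun_def by blast
  have Jnm: "\<And>v. J v \<noteq> -\<infinity>" using J unfolding Gamma0_def proper_fun_def by blast
  have "J u \<noteq> \<infinity>"
  proof
    assume "J u = \<infinity>"
    with subJ[of w] w show False by simp
  qed
  then obtain Ju where Ju: "J u = ereal Ju" using Jnm[of u] by (cases "J u") auto
  have "ereal (H u) \<le> ereal c * ereal Ju" using growth(2) Ju by metis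
  hence "H u \<le> c * Ju" by simp
  hence "c * Ju > 0" using Hu by linarith
  hence Jpos: "Ju > 0" using growth(1) by (simp add: zero_less_mult_iff)
  define lam where "lam = Ju / H u"
  have lam: "lam > 0" using Jpos Hu unfolding lam_def by simp
  have ray: "rayleigh J H u = lam" unfolding rayleigh_def lam_def Ju using Hu by simp
  define A where "A = blinfun_apply \<zeta> u - Ju"
  have fJ: "fconj J \<zeta> = ereal A"
    unfolding fconj_def
  proof (rule antisym)
    show "(SUP v. ereal (blinfun_apply \<zeta> v) - J v) \<le> ereal A"
    proof (rule SUP_least)
      fix v
      show "ereal (blinfun_apply \<zeta> v) - J v \<le> ereal A"
      proof (cases "J v")
        case (real r)
        with subJ[of v] Ju show ?thesis
          by (simp add: A_def blinfun.diff_right)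
      qed (use Jnm in auto)
    qed
    show "ereal A \<le> (SUP v. ereal (blinfun_apply \<zeta> v) - J v)"
      by (rule SUP_upper2[of u]) (auto simp: Ju A_def)
  qed
  define s where "s = lam powr (1 / (p - 1))"
  have s: "s > 0" using lam unfolding s_def by simp
  have "s powr (p - 1) = lam powr (1 / (p - 1) * (p - 1))" unfolding s_def
    by (simp only: powr_powr)
  also have "1 / (p - 1) * (p - 1) = 1" using p by simp
  finally have sp1: "s powr (p - 1) = lam" using lam by simp
  have "s powr p = s powr (1 + (p - 1))" by simp
  also have "... = s * s powr (p - 1)" using s by (simp only: powr_add powr_one)
  finally have sp: "s powr p = s * lam" using sp1 by simp
  have Hs: "\<And>v. H (s *\<^sub>R v) = s powr p * H v" using H_hom s by simp
  have Ju_lam: "Ju = lam * H u" unfolding lam_def using Hu by simp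
  define Hs where "Hs = fconj (\<lambda>v. ereal (H v)) \<zeta>"
  have Hs_ub: "\<And>v. ereal (blinfun_apply \<zeta> v - H v) \<le> Hs"
    unfolding Hs_def fconj_def by (rule SUP_upper2) auto
  have Hs_nn: "Hs \<ge> 0" using Hs_ub[of 0] H0 by (simp add: zero_ereal_def)
  have expo: "1 / (p / (p - 1)) = (p - 1) / p" using p by simp
  have lamp: "lam powr (-1/p) > 0" using lam by simp
  have inv_s: "1 / s = lam powr (-1 / (p - 1))" unfolding s_def
    by (simp add: powr_minus_divide)
  have key: "(1 / s) powr ((p - 1) / p) = lam powr (-1/p)"
    unfolding inv_s using p lam by (simp add: powr_powr)
  have gap: "duality_gap p J H u \<zeta> = lam powr (-1/p)
      - sgn A * \<bar>real_of_ereal (ereal A / Hs)\<bar> powr ((p - 1) / p)"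
    unfolding duality_gap_def dual_rayleigh_def ray fJ Hs_def expo by simp
  show ?thesis
  proof
    assume g0: "duality_gap p J H u \<zeta> = 0"
    define r where "r = real_of_ereal (ereal A / Hs)"
    have eq: "lam powr (-1/p) = sgn A * \<bar>r\<bar> powr ((p - 1) / p)"
      using g0 gap unfolding r_def by simp
    have Apos: "A > 0"
    proof (rule ccontr)
      assume "\<not> A > 0"
      hence "sgn A * \<bar>r\<bar> powr ((p - 1) / p) \<le> 0"
        by (simp add: mult_nonpos_nonneg sgn_real_def)
      with eq lamp show False by simp
    qed
    hence eq2: "lam powr (-1/p) = \<bar>r\<bar> powr ((p - 1) / p)" using eq by simp
    hence "r \<noteq> 0" using lamp by auto
    then obtain h where h: "Hs = ereal h" "h > 0" "r = A / h"
      using Hs_nn Apos unfolding r_def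
      by (cases Hs) (auto simp: ereal_divide split: if_splits)
    have rpos: "r > 0" using h Apos by simp
    have "r = (r powr ((p - 1) / p)) powr (p / (p - 1))"
      using rpos p by (simp add: powr_powr)
    also have "... = ((1 / s) powr ((p - 1) / p)) powr (p / (p - 1))"
      using eq2 key rpos by simp
    also have "... = 1 / s" using s p by (simp add: powr_powr)
    finally have "A / h = 1 / s" using h by simp
    hence hA: "h = A * s" using h(2) s by (simp add: field_simps)
    have ineq: "blinfun_apply \<zeta> v - lam * H v \<le> A" for v
    proof -
      have "ereal (blinfun_apply \<zeta> (s *\<^sub>R v) - H (s *\<^sub>R v)) \<le> ereal h"
        using Hs_ub h(1) by metis
      hence "s * blinfun_apply \<zeta> v - s * lam * H v \<le> A * s"
        using Hs sp hA by (simp add: blinfun.scaleR_right)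
      hence "s * (blinfun_apply \<zeta> v - lam * H v) \<le> s * A"
        by (simp add: algebra_simps)
      thus ?thesis using s by simp
    qed
    define \<eta> where "\<eta> = (1 / lam) *\<^sub>R \<zeta>"
    have "\<eta> \<in> subdiff (\<lambda>v. ereal (H v)) u"
      unfolding subdiff_def
    proof (safe)
      fix v
      have "blinfun_apply \<zeta> v - lam * H v \<le> blinfun_apply \<zeta> u - lam * H u"
        using ineq[of v] unfolding A_def Ju_lam .
      hence "lam * (H u + (1 / lam) * (blinfun_apply \<zeta> v - blinfun_apply \<zeta> u)) \<le> lam * H v"
        using lam by (simp add: algebra_simps)
      hence "H u + (1 / lam) * (blinfun_apply \<zeta> v - blinfun_apply \<zeta> u) \<le> H v"
        using lam by simp
      thus "ereal (H u) + ereal (blinfun_apply \<eta> (v - u)) \<le> ereal (H v)"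
        unfolding \<eta>_def by (simp add: blinfun.diff_right blinfun.scaleR_left diff_divide_distrib)
    qed
    moreover have "\<zeta> = lam *\<^sub>R \<eta>" unfolding \<eta>_def using lam by simp
    ultimately show "p_eigenvector J H u \<zeta> (rayleigh J H u)"
      unfolding p_eigenvector_def ray using u sub by blast
  next
    assume "p_eigenvector J H u \<zeta> (rayleigh J H u)"
    then obtain \<eta> where eta: "\<eta> \<in> subdiff (\<lambda>v. ereal (H v)) u" and ze: "\<zeta> = lam *\<^sub>R \<eta>"
      unfolding p_eigenvector_def ray by blast
    have esub: "\<forall>v. H u + blinfun_apply \<eta> (v - u) \<le> H v"
      using eta unfolding subdiff_def by simp
    have etau: "blinfun_apply \<eta> u = p * H u" by (rule eta_u[OF p H_hom esub])
    have Aval: "A = (p - 1) * lam * H u"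
      unfolding A_def Ju_lam ze using etau by (simp add: blinfun.scaleR_left algebra_simps)
    have Apos: "A > 0" unfolding Aval using p lam Hu by simp
    define h where "h = s * lam * (blinfun_apply \<eta> u - H u)"
    have hval: "h = s * lam * (p - 1) * H u" unfolding h_def etau by (simp add: algebra_simps)
    have "Hs = ereal h"
      unfolding Hs_def fconj_def
    proof (rule antisym)
      show "(SUP v. ereal (blinfun_apply \<zeta> v) - ereal (H v)) \<le> ereal h"
      proof (rule SUP_least)
        fix v :: 'a
        define w where "w = (1 / s) *\<^sub>R v"
        have v: "v = s *\<^sub>R w" unfolding w_def using s by (simp add: scaleR_scaleR)
        have "H u + blinfun_apply \<eta> (w - u) \<le> H w" using esub by blast
        hence "blinfun_apply \<eta> w - H w \<le> blinfun_apply \<eta> u - H u"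
          by (simp add: blinfun.diff_right)
        hence "s * lam * (blinfun_apply \<eta> w - H w) \<le> h"
          unfolding h_def using s lam by (simp add: mult_left_mono)
        moreover have "blinfun_apply \<zeta> v - H v = s * lam * (blinfun_apply \<eta> w - H w)"
          unfolding v ze Hs sp by (simp add: blinfun.scaleR_right blinfun.scaleR_left algebra_simps)
        ultimately show "ereal (blinfun_apply \<zeta> v) - ereal (H v) \<le> ereal h" by simp
      qed
      have "blinfun_apply \<zeta> (s *\<^sub>R u) - H (s *\<^sub>R u) = h"
        unfolding h_def ze Hs sp by (simp add: blinfun.scaleR_right blinfun.scaleR_left algebra_simps)
      thus "ereal h \<le> (SUP v. ereal (blinfun_apply \<zeta> v) - ereal (H v))"
        by (intro SUP_upper2[of "s *\<^sub>R u"]) auto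
    qed
    moreover have "A / h = 1 / s"
      unfolding Aval hval using s lam Hu p by (simp add: field_simps)
    moreover have "h > 0" unfolding hval using s lam Hu p by simp
    ultimately have "real_of_ereal (ereal A / Hs) = 1 / s" by (simp add: ereal_divide)
    thus "duality_gap p J H u \<zeta> = 0" unfolding gap using Apos key s by simp
  qed
qed

end
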